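(* If $Z$ is an integer-valued random variable with finite variance $\sigma_Z^2$, then $$\sup_{n\in\mathbb Z}P(Z=n)\ge\frac{1}{6\sigma_Z+4}.$$ *)

theory Defs
  imports "HOL-Probability.Probability"
begin

end

theory Submission
  imports Defs
begin

theorem lemma5p6:
  fixes M :: "'a measure" and Z :: "'a \<Rightarrow> int"
  assumes "prob_space M"
    and "Z \<in> measurable M (count_space UNIV)"
    and "integrable M (\<lambda>x. (real_of_int (Z x))\<^sup>2)"
  shows "(SUP n::int. measure M {x \<in> space M. Z x = n})
           \<ge> 1 / (6 * sqrt (prob_space.variance M (\<lambda>x. real_of_int (Z x))) + 4)"
proof -
  interpret prob_space M by (rule assms(1))
  have Zm[measurable]: "Z \<in> measurable M (count_space UNIV)" by (rule assms(2))
  have rv: "random_variable borel (\<lambda>x. real_of_int (Z x))" by measurable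
  define \<mu> where "\<mu> = expectation (\<lambda>x. real_of_int (Z x))"
  define V where "V = variance (\<lambda>x. real_of_int (Z x))"
  define \<sigma> where "\<sigma> = sqrt V"
  define t where "t = 2 * \<sigma> + 1/2"
  define p where "p = (SUP n::int. measure M {x \<in> space M. Z x = n})"
  have V0: "V \<ge> 0" unfolding V_def by simp
  have s0: "\<sigma> \<ge> 0" unfolding \<sigma>_def using V0 by simp
  have sV: "\<sigma>\<^sup>2 = V" unfolding \<sigma>_def using V0 by simp
  have t0: "t > 0" unfolding t_def using s0 by simp
  have "t\<^sup>2 \<ge> 4 * V"
  proof -
    have "t\<^sup>2 = 4*\<sigma>\<^sup>2 + 2*\<sigma> + 1/4" unfolding t_def by (simp add: power2_eq_square algebra_simps)
    then show ?thesis using sV s0 by simp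
  qed
  define A where "A = {x\<in>space M. \<bar>real_of_int (Z x) - \<mu>\<bar> \<ge> t}"
  have PA: "prob A \<le> V / t\<^sup>2"
    unfolding A_def V_def \<mu>_def using Chebyshev_inequality[OF rv _ t0] assms(3) by simp
  have "V / t\<^sup>2 \<le> 1/4"
    using \<open>t\<^sup>2 \<ge> 4 * V\<close> t0 by (simp add: divide_simps)
  have Aev: "A \<in> events" unfolding A_def by measurable
  define B where "B = space M - A"
  have PB: "prob B = 1 - prob A" unfolding B_def using prob_compl[OF Aev] by simp
  define S where "S = {\<lceil>\<mu> - t\<rceil>..\<lfloor>\<mu> + t\<rfloor>}"
  have BS: "B \<subseteq> (\<Union>n\<in>S. {x \<in> space M. Z x = n})"
  proof
    fix x assume "x \<in> B"
    then have "x \<in> space M" "\<bar>real_of_int (Z x) - \<mu>\<bar> < t" unfolding B_def A_def by auto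
    then have "Z x \<in> S" unfolding S_def by (auto simp: ceiling_le_iff le_floor_iff)
    then show "x \<in> (\<Union>n\<in>S. {x \<in> space M. Z x = n})" using \<open>x \<in> space M\<close> by auto
  qed
  have bdd: "bdd_above (range (\<lambda>n::int. measure M {x \<in> space M. Z x = n}))"
    by (rule bdd_aboveI[of _ 1]) auto
  have "prob B \<le> prob (\<Union>n\<in>S. {x \<in> space M. Z x = n})"
    by (rule finite_measure_mono[OF BS]) measurable
  also have "\<dots> \<le> (\<Sum>n\<in>S. prob {x \<in> space M. Z x = n})"
    by (rule measure_UNION_le) (auto simp: S_def)
  also have "\<dots> \<le> (\<Sum>n\<in>S. p)"
    unfolding p_def by (rule sum_mono, rule cSUP_upper[OF _ bdd]) auto
  also have "\<dots> = real (card S) * p" by simp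
  also have "\<dots> \<le> (2*t + 1) * p"
  proof (rule mult_right_mono)
    show "p \<ge> 0" unfolding p_def
      by (rule order_trans[OF _ cSUP_upper[OF _ bdd, of 0]]) auto
    have "real (card S) = real (nat (\<lfloor>\<mu> + t\<rfloor> + 1 - \<lceil>\<mu> - t\<rceil>))" unfolding S_def by simp
    also have "\<dots> \<le> 2*t + 1"
    proof -
      have a: "real_of_int \<lfloor>\<mu> + t\<rfloor> \<le> \<mu> + t" by simp
      have b: "real_of_int \<lceil>\<mu> - t\<rceil> \<ge> \<mu> - t" by simp
      have c: "real (nat (\<lfloor>\<mu> + t\<rfloor> + 1 - \<lceil>\<mu> - t\<rceil>)) = max 0 (real_of_int (\<lfloor>\<mu> + t\<rfloor> + 1 - \<lceil>\<mu> - t\<rceil>))"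
        by (simp add: max_def)
      show ?thesis unfolding c using a b t0 by simp linarith
    qed
    finally show "real (card S) \<le> 2*t + 1" .
  qed
  finally have PBp: "prob B \<le> (2*t + 1) * p" .
  have tt: "2*t + 1 = 4*\<sigma> + 2" unfolding t_def by simp
  have key: "3/4 \<le> (4*\<sigma> + 2) * p"
    using PBp PB PA \<open>V / t\<^sup>2 \<le> 1/4\<close> unfolding tt by linarith
  have "1 / (6*\<sigma> + 4) \<le> p"
  proof -
    have k3: "3 \<le> (16*\<sigma> + 8) * p" using key by (simp add: algebra_simps)
    have "1 / (6*\<sigma> + 4) \<le> 3 / (16*\<sigma> + 8)" using s0 by (simp add: divide_simps)
    also have "\<dots> \<le> p" using k3 s0 by (simp add: divide_simps mult.commute)
    finally show ?thesis .
  qed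
  then show ?thesis unfolding p_def \<sigma>_def V_def by simp
qed

end
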